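(* Let $\Gamma$ be a metric graph and $D$ a vertex-supported effective divisor on $\Gamma$. Then each vertex (0-dimensional cell) of the cell complex $|D|$ is an anchor cell.
   Context: A metric graph $\Gamma=(V,E)$ is a connected undirected graph whose edges have positive real lengths $M_e$. Divisors are finite formal $\mathbb{Z}$-combinations of points of $\Gamma$; effective means nonnegative coefficients, vertex-supported means support in $V$. A rational function is continuous, piecewise linear on edges with finitely many pieces and integer slopes; $(f)=\sum_x\mathrm{ord}_x(f)x$ with $\mathrm{ord}_x(f)$ the sum of outgoing slopes at $x$. $R(D)=\{f:D+(f)\ge 0\}$, $|D|=\{D+(f):f\in R(D)\}$. Cells of $|D|$: identifying each open edge $e$ with $(0,M_e)$, a cell is given by nonnegative integers $d_v$ ($v\in V$), ordered partitions $d_e=\sum_{i=1}^{r_e}d_e^i$ into positive integers on some edges, and integers $m_e$ ($e\in E$); $L\in|D|$ belongs to it iff $L(v)=d_v$, $L|_{e^\circ}=\sum_i d_e^i x_i$ with $0<x_1<\dots<x_{r_e}<M_e$ on edges with a partition and $L|_{e^\circ}=0$ otherwise, and each $f\in R(D)$ with $L=D+(f)$ has outgoing slope $m_e$ at $0\in e$. Elements of a cell are its representatives. For a representative $L$ of a cell $C$, with $I_L=\{x\in\Gamma\setminus V: L(x)>0\}$, $\dim C$ is one less than the number of connected components of $\Gamma\setminus I_L$. A divisor $L$ is an anchor divisor if for each edge of $\Gamma$ there is at most one interior point $x$ of that edge with $L(x)>0$. A cell of $|D|$ is an anchor cell if all its representatives are anchor divisors. *)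

theory Defs
  imports "HOL-Analysis.Analysis"
begin

text \<open>A metric graph: finite vertex set, finite edge set, each edge oriented from
  its source to its target (to identify the open edge with (0, len e)), positive length.
  Loops and multiple edges are allowed.\<close>

record ('v, 'e) mgraph =
  verts :: "'v set"
  edges :: "'e set"
  src :: "'e \<Rightarrow> 'v"
  tgt :: "'e \<Rightarrow> 'v"
  len :: "'e \<Rightarrow> real"

text \<open>Points of the metric graph: a vertex, or the interior point of edge e at distance t from src e.\<close>
datatype ('v, 'e) gpt = Vtx 'v | Pt 'e real

definition connected_graph :: "('v, 'e) mgraph \<Rightarrow> bool" where
  "connected_graph G \<longleftrightarrow> verts G \<noteq> {} \<and>
     (\<forall>u\<in>verts G. \<forall>w\<in>verts G.
        (u, w) \<in> ({(src G e, tgt G e) | e. e \<in> edges G} \<union> {(tgt G e, src G e) | e. e \<in> edges G})\<^sup>*)"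

definition metric_graph :: "('v, 'e) mgraph \<Rightarrow> bool" where
  "metric_graph G \<longleftrightarrow> finite (verts G) \<and> finite (edges G) \<and>
     (\<forall>e\<in>edges G. src G e \<in> verts G \<and> tgt G e \<in> verts G \<and> len G e > 0) \<and>
     connected_graph G"

definition pts :: "('v, 'e) mgraph \<Rightarrow> ('v, 'e) gpt set" where
  "pts G = Vtx ` verts G \<union> {Pt e t | e t. e \<in> edges G \<and> 0 < t \<and> t < len G e}"

definition ppos :: "('v, 'e) mgraph \<Rightarrow> 'e \<Rightarrow> real \<Rightarrow> ('v, 'e) gpt" where
  "ppos G e t = (if t \<le> 0 then Vtx (src G e) else if len G e \<le> t then Vtx (tgt G e) else Pt e t)"

text \<open>Topology of the metric graph: quotient topology of the closed intervals [0, len e]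
  glued at the vertices (isolated vertices being open points).\<close>
definition gtop :: "('v, 'e) mgraph \<Rightarrow> ('v, 'e) gpt topology" where
  "gtop G = topology (\<lambda>U. U \<subseteq> pts G \<and>
     (\<forall>e\<in>edges G. openin (top_of_set {0..len G e}) {t \<in> {0..len G e}. ppos G e t \<in> U}))"

type_synonym ('v, 'e) divisor = "('v, 'e) gpt \<Rightarrow> int"

definition is_divisor :: "('v, 'e) mgraph \<Rightarrow> ('v, 'e) divisor \<Rightarrow> bool" where
  "is_divisor G D \<longleftrightarrow> finite {x. D x \<noteq> 0} \<and> {x. D x \<noteq> 0} \<subseteq> pts G"

definition effective :: "('v, 'e) divisor \<Rightarrow> bool" where
  "effective D \<longleftrightarrow> (\<forall>x. D x \<ge> 0)"

definition vertex_supported :: "('v, 'e) mgraph \<Rightarrow> ('v, 'e) divisor \<Rightarrow> bool" where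
  "vertex_supported G D \<longleftrightarrow> (\<forall>x. D x \<noteq> 0 \<longrightarrow> x \<in> Vtx ` verts G)"

definition epar :: "('v, 'e) mgraph \<Rightarrow> (('v, 'e) gpt \<Rightarrow> real) \<Rightarrow> 'e \<Rightarrow> real \<Rightarrow> real" where
  "epar G f e t = f (ppos G e t)"

definition pl_int :: "(real \<Rightarrow> real) \<Rightarrow> real \<Rightarrow> bool" where
  "pl_int g M \<longleftrightarrow> (\<exists>P. finite P \<and> P \<subseteq> {0..M} \<and> 0 \<in> P \<and> M \<in> P \<and>
     (\<forall>a\<in>P. \<forall>b\<in>P. a < b \<and> {a<..<b} \<inter> P = {} \<longrightarrow>
        (\<exists>k::int. \<forall>t\<in>{a..b}. g t = g a + of_int k * (t - a))))"

definition rational_fn :: "('v, 'e) mgraph \<Rightarrow> (('v, 'e) gpt \<Rightarrow> real) \<Rightarrow> bool" where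
  "rational_fn G f \<longleftrightarrow> (\<forall>e\<in>edges G. pl_int (epar G f e) (len G e))"

definition rslope :: "('v, 'e) mgraph \<Rightarrow> (('v, 'e) gpt \<Rightarrow> real) \<Rightarrow> 'e \<Rightarrow> real \<Rightarrow> real" where
  "rslope G f e t = (SOME s. (epar G f e has_real_derivative s) (at_right t))"

definition lslope :: "('v, 'e) mgraph \<Rightarrow> (('v, 'e) gpt \<Rightarrow> real) \<Rightarrow> 'e \<Rightarrow> real \<Rightarrow> real" where
  "lslope G f e t = (SOME s. (epar G f e has_real_derivative s) (at_left t))"

text \<open>ord_x(f): sum of the outgoing slopes of f at x.\<close>
fun ord :: "('v, 'e) mgraph \<Rightarrow> (('v, 'e) gpt \<Rightarrow> real) \<Rightarrow> ('v, 'e) gpt \<Rightarrow> real" where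
  "ord G f (Vtx v) = (\<Sum>e\<in>{e\<in>edges G. src G e = v}. rslope G f e 0)
                   + (\<Sum>e\<in>{e\<in>edges G. tgt G e = v}. - lslope G f e (len G e))"
| "ord G f (Pt e t) = rslope G f e t - lslope G f e t"

definition pdiv :: "('v, 'e) mgraph \<Rightarrow> (('v, 'e) gpt \<Rightarrow> real) \<Rightarrow> ('v, 'e) divisor" where
  "pdiv G f x = (if x \<in> pts G then \<lfloor>ord G f x\<rfloor> else 0)"

definition Rsp :: "('v, 'e) mgraph \<Rightarrow> ('v, 'e) divisor \<Rightarrow> (('v, 'e) gpt \<Rightarrow> real) set" where
  "Rsp G D = {f. rational_fn G f \<and> (\<forall>x. D x + pdiv G f x \<ge> 0)}"

definition linsys :: "('v, 'e) mgraph \<Rightarrow> ('v, 'e) divisor \<Rightarrow> ('v, 'e) divisor set" where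
  "linsys G D = (\<lambda>f x. D x + pdiv G f x) ` Rsp G D"

text \<open>Cell data: dv v = d_v; prt e = ordered partition of d_e (the empty list meaning that
  no partition is given on e); m e = m_e. The cell is its set of representatives.\<close>
definition cell_data_ok :: "('e \<Rightarrow> nat list) \<Rightarrow> bool" where
  "cell_data_ok prt \<longleftrightarrow> (\<forall>e. \<forall>k\<in>set (prt e). k > 0)"

definition cell :: "('v, 'e) mgraph \<Rightarrow> ('v, 'e) divisor \<Rightarrow> ('v \<Rightarrow> nat) \<Rightarrow> ('e \<Rightarrow> nat list)
                     \<Rightarrow> ('e \<Rightarrow> int) \<Rightarrow> ('v, 'e) divisor set" where
  "cell G D dv prt m = {L \<in> linsys G D.
      (\<forall>v\<in>verts G. L (Vtx v) = int (dv v)) \<and>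
      (\<forall>e\<in>edges G. \<exists>xs::real list. length xs = length (prt e) \<and> sorted_wrt (<) xs \<and>
          (\<forall>x\<in>set xs. 0 < x \<and> x < len G e) \<and>
          (\<forall>t. 0 < t \<and> t < len G e \<longrightarrow>
               L (Pt e t) = (\<Sum>i<length xs. if xs ! i = t then int (prt e ! i) else 0))) \<and>
      (\<forall>f\<in>Rsp G D. L = (\<lambda>x. D x + pdiv G f x) \<longrightarrow> (\<forall>e\<in>edges G. rslope G f e 0 = of_int (m e)))}"

definition is_cell :: "('v, 'e) mgraph \<Rightarrow> ('v, 'e) divisor \<Rightarrow> ('v, 'e) divisor set \<Rightarrow> bool" where
  "is_cell G D C \<longleftrightarrow> (\<exists>dv prt m. cell_data_ok prt \<and> C = cell G D dv prt m)"

definition IL :: "('v, 'e) mgraph \<Rightarrow> ('v, 'e) divisor \<Rightarrow> ('v, 'e) gpt set" where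
  "IL G L = {x \<in> pts G - Vtx ` verts G. L x > 0}"

definition rep_dim :: "('v, 'e) mgraph \<Rightarrow> ('v, 'e) divisor \<Rightarrow> int" where
  "rep_dim G L = int (card (connected_components_of (subtopology (gtop G) (pts G - IL G L)))) - 1"

definition anchor_divisor :: "('v, 'e) mgraph \<Rightarrow> ('v, 'e) divisor \<Rightarrow> bool" where
  "anchor_divisor G L \<longleftrightarrow> (\<forall>e\<in>edges G. \<forall>s t. 0 < s \<and> s < len G e \<and> 0 < t \<and> t < len G e \<and>
       L (Pt e s) > 0 \<and> L (Pt e t) > 0 \<longrightarrow> s = t)"

definition anchor_cell :: "('v, 'e) mgraph \<Rightarrow> ('v, 'e) divisor set \<Rightarrow> bool" where
  "anchor_cell G C \<longleftrightarrow> (\<forall>L\<in>C. anchor_divisor G L)"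

end

theory Submission
  imports Defs
begin

lemma openin_gtop:
  "openin (gtop G) U \<longleftrightarrow> U \<subseteq> pts G \<and>
     (\<forall>e\<in>edges G. openin (top_of_set {0..len G e}) {t \<in> {0..len G e}. ppos G e t \<in> U})"
proof -
  define P where "P = (\<lambda>U. U \<subseteq> pts G \<and>
     (\<forall>e\<in>edges G. openin (top_of_set {0..len G e}) {t \<in> {0..len G e}. ppos G e t \<in> U}))"
  have 1: "P (S \<inter> T)" if S: "P S" and T: "P T" for S T
  proof -
    have "{t \<in> {0..len G e}. ppos G e t \<in> S \<inter> T} = {t \<in> {0..len G e}. ppos G e t \<in> S} \<inter> {t \<in> {0..len G e}. ppos G e t \<in> T}" for e by auto
    then show ?thesis using S T unfolding P_def by (auto intro!: openin_Int)
  qed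
  have 2: "P (\<Union>K)" if K: "\<forall>k\<in>K. P k" for K
  proof -
    have "{t \<in> {0..len G e}. ppos G e t \<in> \<Union>K} = \<Union>((\<lambda>k. {t \<in> {0..len G e}. ppos G e t \<in> k}) ` K)" for e by auto
    then show ?thesis using K unfolding P_def by (auto intro!: openin_Union)
  qed
  have "istopology P" unfolding istopology_def using 1 2 by blast
  then show ?thesis unfolding gtop_def P_def[symmetric] by (simp add: P_def)
qed


lemma topspace_gtop:
  assumes mg: "metric_graph G" shows "topspace (gtop G) = pts G"
proof -
  have "openin (gtop G) (pts G)"
    unfolding openin_gtop
  proof (intro conjI ballI)
    fix e assume e: "e \<in> edges G"
    have "{t \<in> {0..len G e}. ppos G e t \<in> pts G} = {0..len G e}"
      using mg e unfolding metric_graph_def ppos_def pts_def by auto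
    then show "openin (top_of_set {0..len G e}) {t \<in> {0..len G e}. ppos G e t \<in> pts G}" by simp
  qed simp
  then have "pts G \<subseteq> topspace (gtop G)" by (simp add: openin_subset)
  moreover have "topspace (gtop G) \<subseteq> pts G"
    using openin_gtop[of G "topspace (gtop G)"] by simp
  ultimately show ?thesis by blast
qed

lemma not_conn:
  assumes mg: "metric_graph G" and e: "e \<in> edges G" and a: "0 < a" "a < b" "b < len G e"
    and La: "L (Pt e a) > 0" and Lb: "L (Pt e b) > 0"
    and gap: "\<forall>t. a < t \<and> t < b \<longrightarrow> L (Pt e t) \<le> 0"
  shows "\<not> connected_space (subtopology (gtop G) (pts G - IL G L))"
proof
  assume con: "connected_space (subtopology (gtop G) (pts G - IL G L))"
  define X where "X = pts G - IL G L"
  define O1 :: "(_, _) gpt set" where "O1 = {Pt e t | t. a < t \<and> t < b} \<inter> pts G"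
  define O2 :: "(_, _) gpt set" where "O2 = pts G - {Pt e t | t. a \<le> t \<and> t \<le> b}"
  have srcv: "src G e \<in> verts G" using mg e unfolding metric_graph_def by auto
  have tgtv: "tgt G e \<in> verts G" using mg e unfolding metric_graph_def by auto
  have O1pts: "O1 \<subseteq> pts G" using a unfolding O1_def pts_def using e by auto
  have oO1: "openin (gtop G) O1"
    unfolding openin_gtop
  proof (intro conjI ballI O1pts)
    fix e' assume e': "e' \<in> edges G"
    show "openin (top_of_set {0..len G e'}) {t \<in> {0..len G e'}. ppos G e' t \<in> O1}"
    proof (cases "e' = e")
      case True
      have "{t \<in> {0..len G e'}. ppos G e' t \<in> O1} = {0..len G e'} \<inter> {a<..<b}"
        using a True e unfolding O1_def ppos_def pts_def by auto
      then show ?thesis by (simp add: openin_open_Int)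
    next
      case False
      have "{t \<in> {0..len G e'}. ppos G e' t \<in> O1} = {}"
        using False unfolding O1_def ppos_def by auto
      then show ?thesis by (metis openin_empty)
    qed
  qed
  have oO2: "openin (gtop G) O2"
    unfolding openin_gtop
  proof (intro conjI ballI)
    show "O2 \<subseteq> pts G" unfolding O2_def by auto
    fix e' assume e': "e' \<in> edges G"
    have s': "src G e' \<in> verts G" "tgt G e' \<in> verts G" using mg e' unfolding metric_graph_def by auto
    show "openin (top_of_set {0..len G e'}) {t \<in> {0..len G e'}. ppos G e' t \<in> O2}"
    proof (cases "e' = e")
      case True
      have "{t \<in> {0..len G e'}. ppos G e' t \<in> O2} = {0..len G e'} \<inter> - {a..b}"
        using a True s' e unfolding O2_def ppos_def pts_def by auto
      then show ?thesis by (simp add: openin_open_Int open_Compl)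
    next
      case False
      have "{t \<in> {0..len G e'}. ppos G e' t \<in> O2} = {0..len G e'}"
        using False s' e' unfolding O2_def ppos_def pts_def by auto
      then show ?thesis by simp
    qed
  qed
  have tsp: "topspace (subtopology (gtop G) X) = X"
    using topspace_gtop[OF mg] unfolding X_def by auto
  define T where "T = O1 \<inter> X"
  have oT: "openin (subtopology (gtop G) X) T"
    unfolding T_def openin_subtopology using oO1 by blast
  have abIL: "Pt e a \<in> IL G L" "Pt e b \<in> IL G L"
    using a La Lb e unfolding IL_def pts_def by auto
  have "X - T = O2 \<inter> X"
    using abIL unfolding X_def T_def O1_def O2_def by (auto simp: le_less)
  then have "openin (subtopology (gtop G) X) (X - T)"
    unfolding openin_subtopology using oO2 by blast
  then have cT: "closedin (subtopology (gtop G) X) T"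
    unfolding closedin_def tsp T_def by auto
  define m where "m = (a + b) / 2"
  have m: "a < m" "m < b" unfolding m_def using a by auto
  have "L (Pt e m) \<le> 0" using gap m by auto
  have "Pt e m \<in> pts G" using m a e unfolding pts_def by force
  then have "Pt e m \<in> T"
    using m \<open>L (Pt e m) \<le> 0\<close> unfolding T_def O1_def X_def IL_def by auto
  moreover have "Vtx (src G e) \<in> X" "Vtx (src G e) \<notin> T"
    using srcv unfolding X_def T_def O1_def IL_def pts_def by auto
  moreover have "T = {} \<or> T = X"
    using con oT cT unfolding connected_space_clopen_in tsp X_def[symmetric] by blast
  ultimately show False by blast
qed


lemma sorted_nth_eq_iff:
  assumes "sorted_wrt (<) (ys::real list)" "i < length ys" "k < length ys"
  shows "ys ! i = ys ! k \<longleftrightarrow> i = k"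
  using assms sorted_wrt_nth_less[OF assms(1)]
  by (metis less_irrefl linorder_neqE_nat)

lemma sum_sorted_single:
  assumes "sorted_wrt (<) (ys::real list)" "k < length ys"
  shows "(\<Sum>i<length ys. if ys ! i = ys ! k then (c i::int) else 0) = c k"
proof -
  have "(\<Sum>i<length ys. if ys ! i = ys ! k then c i else 0) = (\<Sum>i<length ys. if i = k then c i else 0)"
    by (rule sum.cong) (use sorted_nth_eq_iff[OF assms(1) _ assms(2)] in auto)
  also have "\<dots> = c k" using assms(2) by simp
  finally show ?thesis .
qed

lemma sum_pos_member:
  assumes "(\<Sum>i<length ys. if ys ! i = t then (c i::int) else 0) > 0"
  shows "\<exists>i<length ys. ys ! i = t"
proof (rule ccontr)
  assume "\<not> ?thesis"
  then have "(\<Sum>i<length ys. if ys ! i = t then (c i::int) else 0) = 0"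
    by (intro sum.neutral) auto
  with assms show False by simp
qed

theorem lemma2p10:
  fixes G :: "('v, 'e) mgraph" and D :: "('v, 'e) divisor" and C :: "('v, 'e) divisor set"
  assumes "metric_graph G"
    and "is_divisor G D" and "effective D" and "vertex_supported G D"
    and "is_cell G D C"
    and "\<exists>L\<in>C. rep_dim G L = 0"
  shows "anchor_cell G C"
proof -
  have mg: "metric_graph G" by fact
  obtain dv prt m where ok: "cell_data_ok prt" and Cdef: "C = cell G D dv prt m"
    using assms(5) unfolding is_cell_def by blast
  obtain L0 where L0: "L0 \<in> C" "rep_dim G L0 = 0" using assms(6) by blast
  have "card (connected_components_of (subtopology (gtop G) (pts G - IL G L0))) = 1"
    using L0(2) unfolding rep_dim_def by linarith
  then obtain S where "connected_components_of (subtopology (gtop G) (pts G - IL G L0)) = {S}"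
    using card_1_singletonE by blast
  then have con: "connected_space (subtopology (gtop G) (pts G - IL G L0))"
    using connected_components_of_eq_singleton by blast
  show ?thesis
    unfolding anchor_cell_def anchor_divisor_def
  proof (intro ballI allI impI)
    fix L e s t
    assume L: "L \<in> C" and e: "e \<in> edges G"
      and st: "0 < s \<and> s < len G e \<and> 0 < t \<and> t < len G e \<and> L (Pt e s) > 0 \<and> L (Pt e t) > 0"
    show "s = t"
    proof (rule ccontr)
      assume ne: "s \<noteq> t"
      obtain xs :: "real list" where xs: "length xs = length (prt e)"
        "\<forall>t. 0 < t \<and> t < len G e \<longrightarrow>
               L (Pt e t) = (\<Sum>i<length xs. if xs ! i = t then int (prt e ! i) else 0)"
        using L e unfolding Cdef cell_def by blast
      obtain i where i: "i < length xs" "xs ! i = s"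
        using sum_pos_member[of xs s] st xs(2) by force
      obtain j where j: "j < length xs" "xs ! j = t"
        using sum_pos_member[of xs t] st xs(2) by force
      have "i \<noteq> j" using i j ne by auto
      then have len2: "length (prt e) \<ge> 2" using i j xs(1) by linarith
      obtain ys :: "real list" where ys: "length ys = length (prt e)" "sorted_wrt (<) ys"
        "\<forall>x\<in>set ys. 0 < x \<and> x < len G e"
        "\<forall>t. 0 < t \<and> t < len G e \<longrightarrow>
               L0 (Pt e t) = (\<Sum>i<length ys. if ys ! i = t then int (prt e ! i) else 0)"
        using L0(1) e unfolding Cdef cell_def by blast
      define a where "a = ys ! 0"
      define b where "b = ys ! 1"
      have l0: "0 < length ys" and l1: "1 < length ys" using ys(1) len2 by auto
      have ab: "a < b" unfolding a_def b_def using sorted_wrt_nth_less[OF ys(2), of 0 1] l1 by simp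
      have a0: "0 < a" unfolding a_def using ys(3) l0 nth_mem by blast
      have blen: "b < len G e" unfolding b_def using ys(3) l1 nth_mem by blast
      have alen: "a < len G e" using ab blen by linarith
      have b0: "0 < b" using ab a0 by linarith
      have pp: "0 < prt e ! k" if "k < length (prt e)" for k
        using ok that unfolding cell_data_ok_def by (meson nth_mem)
      have "L0 (Pt e a) = int (prt e ! 0)"
        using ys(4) a0 alen sum_sorted_single[OF ys(2) l0, of "\<lambda>i. int (prt e ! i)"]
        unfolding a_def by simp
      then have La: "L0 (Pt e a) > 0" using pp[of 0] ys(1) l0 by simp
      have "L0 (Pt e b) = int (prt e ! 1)"
        using ys(4) b0 blen sum_sorted_single[OF ys(2) l1, of "\<lambda>i. int (prt e ! i)"]
        unfolding b_def by simp
      then have Lb: "L0 (Pt e b) > 0" using pp[of 1] ys(1) l1 by simp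
      have gap: "\<forall>t. a < t \<and> t < b \<longrightarrow> L0 (Pt e t) \<le> 0"
      proof (intro allI impI)
        fix t assume t: "a < t \<and> t < b"
        have "ys ! k \<noteq> t" if k: "k < length ys" for k
        proof (cases "k = 0")
          case True then show ?thesis using t a_def by auto
        next
          case False
          then have "ys ! 1 \<le> ys ! k"
            using sorted_wrt_nth_less[OF ys(2), of 1 k] k
            by (cases "k = 1") auto
          then show ?thesis using t b_def by auto
        qed
        then have "(\<Sum>i<length ys. if ys ! i = t then int (prt e ! i) else 0) = 0"
          by (intro sum.neutral) auto
        then show "L0 (Pt e t) \<le> 0" using ys(4) t a0 blen by auto
      qed
      show False using not_conn[OF mg e a0 ab blen La Lb gap] con by simp
    qed
  qed
qed

end
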